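(* Let $\Sigma$ be a finite set of tokens, $c$ a context, $M_1,M_2$ language models, $f$ a min-bounded function with constant $\lambda_f$, $M=DAGG_f(M_1,M_2)$, and $t\in\Sigma$ a token. Then $t$ is $\le\gamma$-exposed by $M$ over $M_1$ at $c$ and $\le\gamma$-exposed by $M$ over $M_2$ at $c$, where $$\gamma=\lambda_f\,\overline{f_c}(M_1,M_2)\le\lambda_f\sqrt{MAE_c(M_1,M_2)}.$$
   Context: Let $n=|\Sigma|$. A context is a finite sequence of tokens from $\Sigma$. A language model $M$ assigns to every context $c$ and token $t\in\Sigma$ a probability $p_M(t\mid c)>0$, with $\sum_{t\in\Sigma}p_M(t\mid c)=1$. For $g:\Sigma\to\mathbb{R}_{>0}$, $GM(g(t)):=\exp\big(\tfrac1n\sum_{t\in\Sigma}\log g(t)\big)$. Typical probability: $tp_c(M):=GM(p_M(t\mid c))$; relative probability: $rp_M(t\mid c):=p_M(t\mid c)/tp_c(M)$. Typical probability ratio: $tpr_c(M_1,M_2):=GM\big(\tfrac{p_{M_1}(t\mid c)}{p_{M_2}(t\mid c)}\big)$. A token $t$ is $\alpha$-exposed by $M_1$ over $M_2$ at $c$ if $\frac{p_{M_1}(t\mid c)}{p_{M_2}(t\mid c)\cdot tpr_c(M_1,M_2)}=\alpha$; it is $\le\alpha$-exposed if it is $\beta$-exposed for some $\beta\le\alpha$. A function $f:\mathbb{R}_{>0}^2\to\mathbb{R}_{>0}$ is proper-avg if $\min(x,y)\le f(x,y)\le\max(x,y)$ for all $x,y>0$; it is min-bounded if it is proper-avg and there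 is a constant $\lambda_f$ with $f(x,y)\le\lambda_f\min(x,y)$ for all $x,y>0$. Set $M(t\mid c):=f(rp_{M_1}(t\mid c),rp_{M_2}(t\mid c))$; $DAGG_f(M_1,M_2)$ is the language model $M$ with $p_M(t\mid c):=\frac{M(t\mid c)}{\sum_{t'\in\Sigma}M(t'\mid c)}$. Define $\overline{f_c}(M_1,M_2):=GM\big(M(t\mid c)^{-1}\big)$ and $MAE_c(M_1,M_2):=GM\Big(\max\Big(\tfrac{rp_{M_1}(t\mid c)}{rp_{M_2}(t\mid c)},\tfrac{rp_{M_2}(t\mid c)}{rp_{M_1}(t\mid c)}\Big)\Big)$. *)

theory Defs
  imports Complex_Main
begin

text \<open>Tokens form a finite type 't (so Sigma = UNIV, n = CARD('t)); contexts are
  finite token lists; a language model maps a context and a token to a probability.\<close>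

type_synonym 't lm = "'t list \<Rightarrow> 't \<Rightarrow> real"

definition is_lm :: "('t::finite) lm \<Rightarrow> bool" where
  "is_lm M \<longleftrightarrow> (\<forall>c t. M c t > 0) \<and> (\<forall>c. (\<Sum>t\<in>UNIV. M c t) = 1)"

definition GM :: "(('t::finite) \<Rightarrow> real) \<Rightarrow> real" where
  "GM g = exp ((1 / real (card (UNIV :: 't set))) * (\<Sum>t\<in>UNIV. ln (g t)))"

definition tp :: "('t::finite) lm \<Rightarrow> 't list \<Rightarrow> real" where
  "tp M c = GM (\<lambda>t. M c t)"

definition rp :: "('t::finite) lm \<Rightarrow> 't list \<Rightarrow> 't \<Rightarrow> real" where
  "rp M c t = M c t / tp M c"

definition tpr :: "('t::finite) lm \<Rightarrow> 't lm \<Rightarrow> 't list \<Rightarrow> real" where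
  "tpr M1 M2 c = GM (\<lambda>t. M1 c t / M2 c t)"

definition exposed :: "('t::finite) lm \<Rightarrow> 't lm \<Rightarrow> 't list \<Rightarrow> 't \<Rightarrow> real \<Rightarrow> bool" where
  "exposed M1 M2 c t \<alpha> \<longleftrightarrow> M1 c t / (M2 c t * tpr M1 M2 c) = \<alpha>"

definition le_exposed :: "('t::finite) lm \<Rightarrow> 't lm \<Rightarrow> 't list \<Rightarrow> 't \<Rightarrow> real \<Rightarrow> bool" where
  "le_exposed M1 M2 c t \<alpha> \<longleftrightarrow> (\<exists>\<beta>. \<beta> \<le> \<alpha> \<and> exposed M1 M2 c t \<beta>)"

definition proper_avg :: "(real \<Rightarrow> real \<Rightarrow> real) \<Rightarrow> bool" where
  "proper_avg f \<longleftrightarrow> (\<forall>x y. x > 0 \<longrightarrow> y > 0 \<longrightarrow> min x y \<le> f x y \<and> f x y \<le> max x y)"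

definition min_bounded :: "(real \<Rightarrow> real \<Rightarrow> real) \<Rightarrow> real \<Rightarrow> bool" where
  "min_bounded f lam \<longleftrightarrow> proper_avg f \<and> (\<forall>x y. x > 0 \<longrightarrow> y > 0 \<longrightarrow> f x y \<le> lam * min x y)"

definition Mval :: "(real \<Rightarrow> real \<Rightarrow> real) \<Rightarrow> ('t::finite) lm \<Rightarrow> 't lm \<Rightarrow> 't list \<Rightarrow> 't \<Rightarrow> real" where
  "Mval f M1 M2 c t = f (rp M1 c t) (rp M2 c t)"

definition DAGG :: "(real \<Rightarrow> real \<Rightarrow> real) \<Rightarrow> ('t::finite) lm \<Rightarrow> 't lm \<Rightarrow> 't lm" where
  "DAGG f M1 M2 c t = Mval f M1 M2 c t / (\<Sum>t'\<in>UNIV. Mval f M1 M2 c t')"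

definition fbar :: "(real \<Rightarrow> real \<Rightarrow> real) \<Rightarrow> ('t::finite) lm \<Rightarrow> 't lm \<Rightarrow> 't list \<Rightarrow> real" where
  "fbar f M1 M2 c = GM (\<lambda>t. inverse (Mval f M1 M2 c t))"

definition MAE :: "('t::finite) lm \<Rightarrow> 't lm \<Rightarrow> 't list \<Rightarrow> real" where
  "MAE M1 M2 c = GM (\<lambda>t. max (rp M1 c t / rp M2 c t) (rp M2 c t / rp M1 c t))"

end

theory Submission
  imports Defs
begin

lemma GM_pos: "GM g > 0" by (simp add: GM_def)

lemma GM_mult:
  fixes g h :: "'t::finite \<Rightarrow> real"
  assumes "\<And>t. g t > 0" "\<And>t. h t > 0"
  shows "GM (\<lambda>t. g t * h t) = GM g * GM h"
proof -
  have "(\<Sum>t\<in>UNIV. ln (g t * h t)) = (\<Sum>t\<in>UNIV. ln (g t)) + (\<Sum>t\<in>UNIV. ln (h t))"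
    using assms by (simp add: ln_mult sum.distrib[symmetric] less_imp_neq[symmetric])
  then show ?thesis by (simp add: GM_def distrib_left exp_add)
qed

lemma GM_inverse:
  fixes g :: "'t::finite \<Rightarrow> real"
  assumes "\<And>t. g t > 0"
  shows "GM (\<lambda>t. inverse (g t)) = inverse (GM g)"
proof -
  have "(\<Sum>t\<in>UNIV. ln (inverse (g t))) = - (\<Sum>t\<in>UNIV. ln (g t))"
    using assms by (simp add: ln_inverse sum_negf)
  then show ?thesis by (simp add: GM_def exp_minus)
qed

lemma GM_const: "GM (\<lambda>t::'t::finite. k) = k" if "k > 0"
proof -
  have "card (UNIV :: 't set) > 0" by (simp add: card_gt_0_iff)
  then show ?thesis using that by (simp add: GM_def)
qed

lemma GM_div:
  fixes g h :: "'t::finite \<Rightarrow> real"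
  assumes "\<And>t. g t > 0" "\<And>t. h t > 0"
  shows "GM (\<lambda>t. g t / h t) = GM g / GM h"
proof -
  have "GM (\<lambda>t. g t / h t) = GM (\<lambda>t. g t * inverse (h t))" by (simp add: divide_inverse)
  also have "\<dots> = GM g * GM (\<lambda>t. inverse (h t))" using assms by (intro GM_mult) auto
  also have "\<dots> = GM g / GM h" using assms by (simp add: GM_inverse divide_inverse)
  finally show ?thesis .
qed

lemma GM_mono:
  fixes g h :: "'t::finite \<Rightarrow> real"
  assumes "\<And>t. g t > 0" "\<And>t. g t \<le> h t"
  shows "GM g \<le> GM h"
proof -
  have "(\<Sum>t\<in>UNIV. ln (g t)) \<le> (\<Sum>t\<in>UNIV. ln (h t))"
    using assms by (intro sum_mono) (meson ln_le_cancel_iff order_less_le_trans)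
  then show ?thesis unfolding GM_def
    by (intro exp_mono mult_left_mono) auto
qed

lemma maxsq:
  fixes a b :: real assumes a: "a > 0" and b: "b > 0"
  shows "max (inverse a) (inverse b) * max (inverse a) (inverse b) = max (a / b) (b / a) * inverse (a * b)"
proof (cases "a \<le> b")
  case True
  have "inverse b \<le> inverse a" using True a by (simp add: le_imp_inverse_le)
  hence 1: "max (inverse a) (inverse b) = inverse a" by simp
  have "a / b \<le> 1" "1 \<le> b / a" using True a b by simp_all
  hence "max (a / b) (b / a) = b / a" by simp
  then show ?thesis unfolding 1 using a b by (simp add: field_simps)
next
  case False
  have "inverse a \<le> inverse b" using False b by (simp add: le_imp_inverse_le)
  hence 1: "max (inverse a) (inverse b) = inverse b" by simp
  have "b / a \<le> 1" "1 \<le> a / b" using False a b by simp_all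
  hence "max (a / b) (b / a) = a / b" by simp
  then show ?thesis unfolding 1 using a b by (simp add: field_simps)
qed

theorem theorem2:
  fixes M1 M2 :: "('t::finite) lm" and f :: "real \<Rightarrow> real \<Rightarrow> real"
    and lam :: real and c :: "'t list" and t :: 't
  assumes "is_lm M1" and "is_lm M2" and "min_bounded f lam"
  shows "le_exposed (DAGG f M1 M2) M1 c t (lam * fbar f M1 M2 c)
       \<and> le_exposed (DAGG f M1 M2) M2 c t (lam * fbar f M1 M2 c)
       \<and> lam * fbar f M1 M2 c \<le> lam * sqrt (MAE M1 M2 c)"
proof -
  have p1: "\<And>t. M1 c t > 0" and p2: "\<And>t. M2 c t > 0" using assms(1,2) by (auto simp: is_lm_def)
  have tp1: "tp M1 c > 0" and tp2: "tp M2 c > 0" by (simp_all add: tp_def GM_pos)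
  have r1: "\<And>t. rp M1 c t > 0" and r2: "\<And>t. rp M2 c t > 0"
    using p1 p2 tp1 tp2 by (simp_all add: rp_def)
  have pa: "\<And>x y. x > 0 \<Longrightarrow> y > 0 \<Longrightarrow> min x y \<le> f x y \<and> f x y \<le> max x y"
    and mb: "\<And>x y. x > 0 \<Longrightarrow> y > 0 \<Longrightarrow> f x y \<le> lam * min x y"
    using assms(3) by (auto simp: min_bounded_def proper_avg_def)
  define V where "V = (\<lambda>t. Mval f M1 M2 c t)"
  have Vpos: "\<And>t. V t > 0"
  proof -
    fix t
    have "min (rp M1 c t) (rp M2 c t) > 0" using r1 r2 by simp
    then show "V t > 0" using pa[OF r1[of t] r2[of t]] unfolding V_def Mval_def by linarith
  qed
  have Vle1: "\<And>t. V t \<le> lam * rp M1 c t" and Vle2: "\<And>t. V t \<le> lam * rp M2 c t"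
  proof -
    fix t
    have "lam * min (rp M1 c t) (rp M2 c t) > 0" using mb[OF r1[of t] r2[of t]] Vpos[of t]
      unfolding V_def Mval_def by linarith
    then have lam: "lam > 0" using r1 r2 by (simp add: zero_less_mult_iff) (meson min_less_iff_conj not_less_iff_gr_or_eq)
    show "V t \<le> lam * rp M1 c t" "V t \<le> lam * rp M2 c t"
      using mb[OF r1[of t] r2[of t]] lam unfolding V_def Mval_def
      by (meson min.cobounded1 min.cobounded2 mult_left_mono less_imp_le order_trans)+
  qed
  have lam: "lam > 0"
  proof -
    have "V t > 0" by (rule Vpos)
    then have "0 < lam * rp M1 c t" using Vle1[of t] by linarith
    then show ?thesis using r1[of t] by (simp add: zero_less_mult_iff)
  qed
  define S where "S = (\<Sum>t'\<in>UNIV. V t')"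
  have Spos: "S > 0" unfolding S_def using Vpos by (simp add: sum_pos)
  have D: "\<And>t. DAGG f M1 M2 c t = V t / S" by (simp add: DAGG_def V_def S_def)
  have fb: "fbar f M1 M2 c = inverse (GM V)"
    unfolding fbar_def V_def[symmetric] using Vpos by (simp add: GM_inverse)
  have GMV: "GM V > 0" by (rule GM_pos)
  have expo: "le_exposed (DAGG f M1 M2) M c t (lam * fbar f M1 M2 c)"
    if pM: "\<And>t. M c t > 0" and tpM: "tp M c > 0" and rM: "rp M c t > 0"
      and Vle: "V t \<le> lam * rp M c t" for M
  proof -
    have tpr: "tpr (DAGG f M1 M2) M c = GM V / (S * tp M c)"
    proof -
      have "tpr (DAGG f M1 M2) M c = GM (\<lambda>t. V t / S / M c t)" by (simp add: tpr_def D)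
      also have "\<dots> = GM (\<lambda>t. V t / (\<lambda>t. S * M c t) t)" by simp
      also have "\<dots> = GM V / GM (\<lambda>t. S * M c t)"
        using Vpos pM Spos by (intro GM_div) auto
      also have "GM (\<lambda>t. S * M c t) = S * tp M c"
        using GM_mult[of "\<lambda>_. S" "\<lambda>t. M c t"] Spos pM by (simp add: tp_def GM_const)
      finally show ?thesis .
    qed
    have eq: "DAGG f M1 M2 c t / (M c t * tpr (DAGG f M1 M2) M c) = V t * fbar f M1 M2 c / rp M c t"
      unfolding tpr D fb rp_def using Spos tpM pM[of t] GMV by (simp add: field_simps)
    have "V t * fbar f M1 M2 c / rp M c t \<le> lam * rp M c t * fbar f M1 M2 c / rp M c t"
      using Vle fb GMV rM by (intro divide_right_mono mult_right_mono) auto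
    also have "\<dots> = lam * fbar f M1 M2 c" using rM by simp
    finally show ?thesis unfolding le_exposed_def exposed_def eq by blast
  qed
  have part3: "fbar f M1 M2 c \<le> sqrt (MAE M1 M2 c)"
  proof -
    let ?m = "\<lambda>t. max (inverse (rp M1 c t)) (inverse (rp M2 c t))"
    have mpos: "\<And>t. ?m t > 0" using r1 by (simp add: less_max_iff_disj)
    have "fbar f M1 M2 c \<le> GM ?m"
      unfolding fbar_def
    proof (rule GM_mono)
      fix t
      show "inverse (Mval f M1 M2 c t) > 0" using Vpos[of t] by (simp add: V_def)
      have "min (rp M1 c t) (rp M2 c t) \<le> Mval f M1 M2 c t" using pa[OF r1[of t] r2[of t]] by (simp add: Mval_def)
      moreover have "min (rp M1 c t) (rp M2 c t) > 0" using r1 r2 by simp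
      ultimately have "inverse (Mval f M1 M2 c t) \<le> inverse (min (rp M1 c t) (rp M2 c t))"
        by (simp add: le_imp_inverse_le)
      also have "\<dots> = ?m t" using r1[of t] r2[of t]
        by (cases "rp M1 c t \<le> rp M2 c t") (auto simp: min_def max_def)
      finally show "inverse (Mval f M1 M2 c t) \<le> ?m t" .
    qed
    moreover have "GM ?m = sqrt (MAE M1 M2 c)"
    proof -
      have GMr1: "GM (\<lambda>t. rp M1 c t) = 1"
        unfolding rp_def using GM_div[of "\<lambda>t. M1 c t" "\<lambda>_. tp M1 c"] p1 tp1
        by (simp add: tp_def GM_const)
      have GMr2: "GM (\<lambda>t. rp M2 c t) = 1"
        unfolding rp_def using GM_div[of "\<lambda>t. M2 c t" "\<lambda>_. tp M2 c"] p2 tp2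
        by (simp add: tp_def GM_const)
      have pt: "?m t * ?m t = max (rp M1 c t / rp M2 c t) (rp M2 c t / rp M1 c t) * inverse (rp M1 c t * rp M2 c t)" for t
        using maxsq[OF r1[of t] r2[of t]] .
      have mp: "\<And>t. max (rp M1 c t / rp M2 c t) (rp M2 c t / rp M1 c t) > 0" using r1 r2
        by (simp add: less_max_iff_disj)
      have "GM ?m * GM ?m = GM (\<lambda>t. ?m t * ?m t)" using mpos by (simp add: GM_mult)
      also have "\<dots> = GM (\<lambda>t. max (rp M1 c t / rp M2 c t) (rp M2 c t / rp M1 c t) * inverse (rp M1 c t * rp M2 c t))"
        using pt by simp
      also have "\<dots> = MAE M1 M2 c * GM (\<lambda>t. inverse (rp M1 c t * rp M2 c t))"
        unfolding MAE_def using mp r1 r2 by (intro GM_mult) auto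
      also have "GM (\<lambda>t. inverse (rp M1 c t * rp M2 c t)) = 1"
        using r1 r2 GMr1 GMr2 by (simp add: GM_inverse GM_mult)
      finally have "GM ?m * GM ?m = MAE M1 M2 c" by simp
      then have "sqrt (MAE M1 M2 c) = \<bar>GM ?m\<bar>"
        using real_sqrt_abs2[of "GM ?m"] by (simp only:)
      then show ?thesis using GM_pos[of ?m] by simp
    qed
    ultimately show ?thesis by simp
  qed
  show ?thesis
    using expo[OF p1 tp1 r1 Vle1] expo[OF p2 tp2 r2 Vle2] part3 lam by simp
qed

end
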